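(* Let $p$ be a prime and let $a,b\in\mathbb{C}_p$ with $a\neq0$, $b\neq0$, $a\neq b$ and $|a|_p<|b|_p$. Let $P=-\frac1b$, $D=\mathbb{C}_p\setminus\{P\}$, $f(x)=\frac{ax^2}{bx+1}$ on $D$, $x_1=0$, $x_2=\frac{1}{a-b}$. For $n\geq0$ put $r_n=\frac{|b|_p^{n-1}}{|a|_p^{n}}$, and put $l_0=0$, $l_{n+1}=\frac{|a|_p^{n}}{|b|_p^{n+1}}$. Define $\Omega=\{x\in D:\ x^{(i)}=P\text{ for some } i\ge1\}$, $\Psi=\{x\in D\setminus\{x_2\}:\ x^{(j)}=x_2\text{ for some } j\ge1\}$, $\Sigma=\{x\in D\setminus\{x_1,x_2\}:\ x^{(k)}=x\text{ for some }k\ge 2\}$. Then $$\Omega\cup\Psi\cup\Sigma\subset\bigcup_{i=1}^{\infty}S_{r_i}(x_1)\cup\bigcup_{j=0}^{\infty}S_{l_j}(P).$$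
   Context: $\mathbb{C}_p$ is the field of complex $p$-adic numbers with $p$-adic norm $|\cdot|_p$. For $c\in\mathbb{C}_p$ and $r\ge0$, $S_r(c)=\{x\in\mathbb{C}_p:|x-c|_p=r\}$. For $x\in D$, $x^{(n)}=f^n(x)$ denotes the $n$-th iterate of $f$ at $x$ (defined as long as no earlier iterate equals $P$). *)

theory Defs
  imports "HOL-Computational_Algebra.Polynomial"
begin

text \<open>C_p is characterised (up to isometric isomorphism) as a field K with an
 absolute value nv that is non-archimedean, normalised by |p| = 1/p (hence restricts
 to the p-adic absolute value on Q), complete, algebraically closed, and in which the
 algebraic closure of Q is dense.\<close>

definition is_Cp :: "nat \<Rightarrow> ('a::field \<Rightarrow> real) \<Rightarrow> bool" where
  "is_Cp p nv \<longleftrightarrow>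
     prime p \<and>
     (\<forall>x. 0 \<le> nv x) \<and> (\<forall>x. nv x = 0 \<longleftrightarrow> x = 0) \<and>
     (\<forall>x y. nv (x * y) = nv x * nv y) \<and>
     (\<forall>x y. nv (x + y) \<le> max (nv x) (nv y)) \<and>
     nv (of_nat p) = 1 / real p \<and>
     (\<forall>X :: nat \<Rightarrow> 'a. (\<forall>e>0. \<exists>N. \<forall>m\<ge>N. \<forall>n\<ge>N. nv (X m - X n) < e)
         \<longrightarrow> (\<exists>L. \<forall>e>0. \<exists>N. \<forall>n\<ge>N. nv (X n - L) < e)) \<and>
     (\<forall>q :: 'a poly. 0 < degree q \<longrightarrow> (\<exists>x. poly q x = 0)) \<and>
     (\<forall>x e. 0 < e \<longrightarrow> (\<exists>y. (\<exists>q :: int poly. q \<noteq> 0 \<and> poly (map_poly of_int q) y = 0)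
                                 \<and> nv (x - y) < e))"

definition sphere_nv :: "('a::field \<Rightarrow> real) \<Rightarrow> real \<Rightarrow> 'a \<Rightarrow> 'a set" where
  "sphere_nv nv r c = {x. nv (x - c) = r}"

definition iter_defined :: "('a \<Rightarrow> 'a) \<Rightarrow> 'a \<Rightarrow> nat \<Rightarrow> 'a \<Rightarrow> bool" where
  "iter_defined f P n x \<longleftrightarrow> (\<forall>m<n. (f ^^ m) x \<noteq> P)"

fun lseq :: "real \<Rightarrow> real \<Rightarrow> nat \<Rightarrow> real" where
  "lseq na nb 0 = 0"
| "lseq na nb (Suc n) = na ^ n / nb ^ (Suc n)"

definition rseq :: "real \<Rightarrow> real \<Rightarrow> nat \<Rightarrow> real" where
  "rseq na nb n = nb powi (int n - 1) / na ^ n"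

end

theory Submission
  imports Defs
begin

locale nvf =
  fixes nv :: "'a::field \<Rightarrow> real"
  assumes nonneg: "\<And>x. 0 \<le> nv x"
    and zero: "\<And>x. nv x = 0 \<longleftrightarrow> x = 0"
    and mult: "\<And>x y. nv (x * y) = nv x * nv y"
    and ultra: "\<And>x y. nv (x + y) \<le> max (nv x) (nv y)"
begin

lemma one: "nv 1 = 1"
proof -
  have "nv 1 = nv 1 * nv 1" using mult[of 1 1] by simp
  moreover have "nv 1 \<noteq> 0" using zero by simp
  ultimately show ?thesis by simp
qed

lemma minus: "nv (- x) = nv x"
proof -
  have "nv (-1) * nv (-1) = 1" using mult[of "-1" "-1"] one by simp
  hence "(nv (-1) - 1) * (nv (-1) + 1) = 0" by (simp add: algebra_simps)
  moreover have "nv (-1) + 1 \<noteq> 0" using nonneg[of "-1"] by linarith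
  ultimately have "nv (-1) = 1" by simp
  thus ?thesis using mult[of "-1" x] by simp
qed

lemma inv: "nv (inverse x) = 1 / nv x"
proof (cases "x = 0")
  case True
  have "nv 0 = 0" using zero by simp
  thus ?thesis using True by simp
next
  case False
  have "nv x * nv (inverse x) = 1" using mult[of x "inverse x"] one False by simp
  thus ?thesis using False zero by (simp add: field_simps)
qed

lemma divide: "nv (x / y) = nv x / nv y"
  using mult[of x "inverse y"] inv[of y] by (simp add: divide_inverse)

lemma pow: "nv (x ^ n) = nv x ^ n"
  by (induction n) (simp_all add: one mult)

lemma strict: assumes "nv x < nv y" shows "nv (x + y) = nv y"
proof -
  have "nv (x + y) \<le> nv y" using ultra[of x y] assms by simp
  moreover have "nv y \<le> max (nv (x + y)) (nv (- x))" using ultra[of "x + y" "- x"] by simp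
  hence "nv y \<le> nv (x + y)" using assms minus by (auto simp: max_def split: if_splits)
  ultimately show ?thesis by simp
qed

end

locale dyn = nvf nv for nv :: "'a::field \<Rightarrow> real" +
  fixes a b :: 'a
  assumes a0: "a \<noteq> 0" and lt: "nv a < nv b"
begin

definition "al = nv a"
definition "be = nv b"
definition "PP = - 1 / b"
definition "ff = (\<lambda>x. a * x^2 / (b * x + 1))"
definition "RR j = be ^ j / al ^ (j + 1)"

lemma al_pos: "0 < al"
proof -
  have "nv a \<noteq> 0" using zero a0 by simp
  thus ?thesis using nonneg[of a] unfolding al_def by linarith
qed
lemma al_be: "al < be" using lt unfolding al_def be_def .
lemma be_pos: "0 < be" using al_be al_pos by linarith
lemma b0: "b \<noteq> 0"
proof
  assume "b = 0"
  hence "be = 0" using zero be_def by simp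
  thus False using al_be al_pos by linarith
qed
lemma small: assumes "0 < t" "t < 1 / be" shows "al * t < 1"
proof -
  have "be * t < 1" using assms be_pos by (simp add: less_divide_eq mult.commute)
  moreover have "al * t < be * t" using assms(1) al_be by simp
  ultimately show ?thesis by linarith
qed

lemma nvP: "nv PP = 1 / be" unfolding PP_def be_def using minus divide one by simp

lemma f_out: assumes "1 / be < nv x" shows "nv (ff x) = (al / be) * nv x"
proof -
  have "1 < be * nv x" using assms be_pos by (simp add: divide_less_eq mult.commute)
  hence "nv 1 < nv (b * x)" using one mult unfolding be_def by simp
  hence "nv (b * x + 1) = be * nv x" using strict[of 1 "b*x"] mult be_def by (simp add: add.commute)
  moreover have "nv x > 0" using assms be_pos
    by (smt (verit) divide_pos_pos)
  ultimately show ?thesis unfolding ff_def divide mult pow al_def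
    by (simp add: power2_eq_square)
qed

lemma f_in: assumes "nv x < 1 / be" shows "nv (ff x) = al * nv x ^ 2"
proof -
  have "be * nv x < 1" using assms be_pos by (simp add: less_divide_eq mult.commute)
  hence "nv (b * x) < nv 1" using one mult unfolding be_def by simp
  hence "nv (b * x + 1) = 1" using strict[of "b*x" 1] one by simp
  thus ?thesis unfolding ff_def divide mult pow al_def by simp
qed

lemma f_on: "nv (ff x) = al * nv x ^ 2 / (be * nv (x - PP))"
proof -
  have "b * x + 1 = b * (x - PP)" unfolding PP_def using b0 by (simp add: field_simps)
  thus ?thesis unfolding ff_def divide mult pow al_def be_def by (simp add: mult)
qed

lemma f0: "ff 0 = 0" unfolding ff_def by simp
lemma fP: "ff PP = 0" unfolding ff_def PP_def using b0 by simp
lemma iter0: "(ff ^^ n) 0 = 0" by (induction n) (simp_all add: f0)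

lemma inner: assumes "0 < nv y" "nv y < 1 / be"
  shows "0 < nv ((ff ^^ Suc m) y) \<and> nv ((ff ^^ Suc m) y) < nv y"
proof (induction m)
  case 0
  have "al * nv y < 1" using small assms by blast
  hence "al * nv y ^ 2 < nv y" using assms(1) by (simp add: power2_eq_square)
  thus ?case using f_in[OF assms(2)] assms al_pos by simp
next
  case (Suc m)
  let ?z = "(ff ^^ Suc m) y"
  have z: "0 < nv ?z" "nv ?z < 1 / be" using Suc assms by auto
  have "al * nv ?z < 1" using small z by blast
  hence "al * nv ?z ^ 2 < nv ?z" using z(1) by (simp add: power2_eq_square)
  thus ?case using f_in[OF z(2)] z Suc al_pos by simp
qed

lemma RR_Suc: "RR (Suc j) = (be / al) * RR j"
  unfolding RR_def using al_pos be_pos by (simp add: field_simps)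
lemma RR0: "RR 0 = 1 / al" unfolding RR_def by simp

lemma iterS: "(ff ^^ Suc n) x = (ff ^^ n) (ff x)"
  by (simp add: funpow_Suc_right del: funpow.simps)

lemma outer_k:
  "1 / be < nv x \<Longrightarrow> nv x < (1 / al) * (be / al) ^ k \<Longrightarrow> (\<forall>j. nv x \<noteq> RR j)
   \<Longrightarrow> \<exists>n. 0 < nv ((ff ^^ n) x) \<and> nv ((ff ^^ n) x) < 1 / be"
proof (induction k arbitrary: x)
  case 0
  have fx: "nv (ff x) = (al / be) * nv x" using f_out 0 by blast
  have "0 < nv x" using 0 be_pos by (smt (verit) divide_pos_pos)
  hence "0 < nv (ff x)" using fx al_pos be_pos by simp
  moreover have "(al / be) * nv x < (al / be) * (1 / al)"
    using 0 al_pos be_pos by (intro mult_strict_left_mono) auto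
  hence "nv (ff x) < 1 / be" using fx al_pos by simp
  ultimately show ?case by (intro exI[of _ 1]) simp
next
  case (Suc k)
  have fx: "nv (ff x) = (al / be) * nv x" using f_out Suc by blast
  have "0 < nv x" using Suc be_pos by (smt (verit) divide_pos_pos)
  hence pos: "0 < nv (ff x)" using fx al_pos be_pos by simp
  have eq: "(al / be) * ((1 / al) * (be / al) ^ Suc k) = (1 / al) * (be / al) ^ k"
    using al_pos be_pos by (simp add: field_simps)
  have "(al / be) * nv x < (al / be) * ((1 / al) * (be / al) ^ Suc k)"
    using Suc.prems al_pos be_pos by (intro mult_strict_left_mono) auto
  hence lt2: "nv (ff x) < (1 / al) * (be / al) ^ k" using fx eq by simp
  have bk: "nv x = (be / al) * nv (ff x)" using fx al_pos be_pos by simp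
  consider "nv (ff x) < 1 / be" | "nv (ff x) = 1 / be" | "1 / be < nv (ff x)" by linarith
  thus ?case
  proof cases
    case 1 thus ?thesis using pos by (intro exI[of _ 1]) simp
  next
    case 2
    hence "nv x = RR 0" using bk RR0 al_pos be_pos by simp
    thus ?thesis using Suc.prems by blast
  next
    case 3
    have "\<forall>j. nv (ff x) \<noteq> RR j"
    proof
      fix j show "nv (ff x) \<noteq> RR j"
      proof
        assume "nv (ff x) = RR j"
        hence "nv x = RR (Suc j)" using bk RR_Suc by simp
        thus False using Suc.prems by blast
      qed
    qed
    then obtain n where "0 < nv ((ff ^^ n) (ff x)) \<and> nv ((ff ^^ n) (ff x)) < 1 / be"
      using Suc.IH[OF 3 lt2] by blast
    thus ?thesis using iterS by metis
  qed
qed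

lemma outer:
  assumes "1 / be < nv x" "\<forall>j. nv x \<noteq> RR j"
  shows "\<exists>n. 0 < nv ((ff ^^ n) x) \<and> nv ((ff ^^ n) x) < 1 / be"
proof -
  have "1 < be / al" using al_pos al_be by simp
  then obtain k where "al * nv x < (be / al) ^ k" using real_arch_pow by blast
  hence "nv x < (1 / al) * (be / al) ^ k" using al_pos by (simp add: field_simps)
  thus ?thesis using outer_k assms by blast
qed

lemma reach:
  assumes "x \<noteq> 0" "x \<noteq> PP" "\<forall>j. nv x \<noteq> RR j" "\<forall>m. nv (x - PP) \<noteq> lseq al be m"
  shows "\<exists>n. 0 < nv ((ff ^^ n) x) \<and> nv ((ff ^^ n) x) < 1 / be"
proof -
  have xpos: "0 < nv x" using assms(1) zero nonneg by (metis less_eq_real_def)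
  consider "nv x < 1 / be" | "nv x = 1 / be" | "1 / be < nv x" by linarith
  thus ?thesis
  proof cases
    case 1 thus ?thesis using xpos by (intro exI[of _ 0]) simp
  next
    case 3 thus ?thesis using outer assms by blast
  next
    case 2
    define u where "u = nv (x - PP)"
    have "u \<le> max (nv x) (nv (- PP))" unfolding u_def using ultra[of x "- PP"] by simp
    hence ule: "u \<le> 1 / be" using 2 minus nvP by simp
    have "u \<noteq> 1 / be" using assms(4)[rule_format, of 1] u_def by simp
    hence ult: "u < 1 / be" using ule by simp
    have upos: "0 < u" unfolding u_def using assms(2) zero nonneg by (metis less_eq_real_def right_minus_eq)
    define T where "T = nv (ff x)"
    have T: "T = al * (1 / be) ^ 2 / (be * u)" unfolding T_def u_def using f_on 2 by simp
    have Tpos: "0 < T" unfolding T using al_pos be_pos upos by simp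
    consider "T < 1 / be" | "T = 1 / be" | "1 / be < T" by linarith
    thus ?thesis
    proof cases
      case 1 thus ?thesis using Tpos unfolding T_def by (intro exI[of _ 1]) simp
    next
      case 2
      hence "u = al / be ^ 2" using T al_pos be_pos upos by (simp add: field_simps power2_eq_square)
      hence "u = lseq al be 2" by (simp add: numeral_2_eq_2)
      thus ?thesis using assms(4) u_def by metis
    next
      case 3
      have "\<forall>j. T \<noteq> RR j"
      proof
        fix j show "T \<noteq> RR j"
        proof
          assume "T = RR j"
          hence "al * (1 / be) ^ 2 / (be * u) = be ^ j / al ^ (j + 1)" using T RR_def by simp
          hence "u = al ^ (j + 2) / be ^ (j + 3)" using al_pos be_pos upos
            by (simp add: field_simps power2_eq_square power_add power3_eq_cube)
          hence "u = lseq al be (j + 3)" by (simp add: numeral_3_eq_3)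
          thus False using assms(4) u_def by metis
        qed
      qed
      then obtain n where "0 < nv ((ff ^^ n) (ff x)) \<and> nv ((ff ^^ n) (ff x)) < 1 / be"
        using outer 3 unfolding T_def by blast
      thus ?thesis using iterS by metis
    qed
  qed
qed

lemma ab: "a \<noteq> b" using al_be al_def be_def by auto

definition "X2 = 1 / (a - b)"

lemma nvX2: "nv X2 = 1 / be"
proof -
  have "nv (a + (- b)) = nv (- b)" using strict[of a "- b"] minus lt by simp
  thus ?thesis unfolding X2_def using divide one minus be_def by simp
qed

lemma X20: "X2 \<noteq> 0" unfolding X2_def using ab by simp

lemma fX2: "ff X2 = X2"
proof -
  have d: "a - b \<noteq> 0" using ab by simp
  have e: "b * X2 + 1 = a * X2" unfolding X2_def using d by (simp add: field_simps)
  have "a * X2 \<noteq> 0" using a0 X20 by simp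
  thus ?thesis unfolding ff_def e by (simp add: power2_eq_square)
qed

lemma iterX2: "(ff ^^ n) X2 = X2" by (induction n) (simp_all add: fX2)

lemma iterP: "(ff ^^ Suc n) PP = 0" using iterS fP iter0 by metis

lemma PP0: "PP \<noteq> 0" unfolding PP_def using b0 by simp
lemma iter_period: "(ff ^^ k) x = x \<Longrightarrow> (ff ^^ (k * N)) x = x"
proof (induction N)
  case 0 thus ?case by simp
next
  case (Suc N)
  have "(ff ^^ (k * N + k)) x = (ff ^^ (k * N)) ((ff ^^ k) x)"
    by (simp only: funpow_add o_apply)
  moreover have "k * Suc N = k * N + k" by simp
  ultimately have "(ff ^^ (k * Suc N)) x = (ff ^^ (k * N)) ((ff ^^ k) x)" by (simp only:)
  thus ?case using Suc by simp
qed

lemma main_loc: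
  assumes "x \<noteq> 0" "x \<noteq> PP" "\<forall>j. nv x \<noteq> RR j" "\<forall>m. nv (x - PP) \<noteq> lseq al be m"
  shows "(\<forall>i. (ff ^^ i) x \<noteq> PP) \<and> (\<forall>j. (ff ^^ j) x \<noteq> X2) \<and> (\<forall>k\<ge>1. (ff ^^ k) x \<noteq> x)"
proof -
  obtain n where y: "0 < nv ((ff ^^ n) x)" "nv ((ff ^^ n) x) < 1 / be" using reach[OF assms] by blast
  have fe: "0 < nv ((ff ^^ m) x) \<and> nv ((ff ^^ m) x) < 1 / be" if nm: "n \<le> m" for m
  proof -
    obtain d where "m = n + d" using le_Suc_ex[OF nm] by blast
    hence m: "m = d + n" by simp
    have eq: "(ff ^^ m) x = (ff ^^ d) ((ff ^^ n) x)" unfolding m by (simp only: funpow_add o_apply)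
    show ?thesis
    proof (cases d)
      case 0 thus ?thesis using y eq by simp
    next
      case (Suc d')
      thus ?thesis using inner[OF y, of d'] eq y by auto
    qed
  qed
  have c1: "(ff ^^ i) x \<noteq> PP" for i
  proof
    assume h: "(ff ^^ i) x = PP"
    show False
    proof (cases "n \<le> i")
      case True thus False using fe[OF True] h nvP by simp
    next
      case False
      then obtain d where "n = i + Suc d" using less_imp_Suc_add[of i n] by auto
      hence n: "n = Suc d + i" by simp
      have "(ff ^^ n) x = (ff ^^ Suc d) ((ff ^^ i) x)" unfolding n by (simp only: funpow_add o_apply)
      hence "(ff ^^ n) x = 0" using h iterP by simp
      thus False using y zero[of 0] by simp
    qed
  qed
  have c2: "(ff ^^ j) x \<noteq> X2" for j
  proof
    assume h: "(ff ^^ j) x = X2"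
    show False
    proof (cases "n \<le> j")
      case True thus False using fe[OF True] h nvX2 by simp
    next
      case False
      then obtain d where "n = j + d" using le_Suc_ex[of j n] by auto
      hence n: "n = d + j" by simp
      have "(ff ^^ n) x = (ff ^^ d) ((ff ^^ j) x)" unfolding n by (simp only: funpow_add o_apply)
      hence "(ff ^^ n) x = X2" using h iterX2 by simp
      thus False using y nvX2 by simp
    qed
  qed
  have c3: "(ff ^^ k) x \<noteq> x" if k: "k \<ge> 1" for k
  proof
    assume h: "(ff ^^ k) x = x"
    have "(ff ^^ (k * n)) x = x" using iter_period h by blast
    moreover have "n \<le> k * n" using k by simp
    ultimately have x: "0 < nv x" "nv x < 1 / be" using fe by metis+
    obtain k' where kk: "k = Suc k'" using k by (cases k) auto
    show False using inner[OF x, of k'] h kk by simp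
  qed
  show ?thesis using c1 c2 c3 by blast
qed

end

theorem corollary3p4:
  fixes nv :: "'a::field \<Rightarrow> real" and p :: nat and a b :: 'a
  assumes Cp: "is_Cp p nv"
    and a0: "a \<noteq> 0" and b0: "b \<noteq> 0" and ab: "a \<noteq> b"
    and lt: "nv a < nv b"
  defines "P \<equiv> - 1 / b"
    and "f \<equiv> (\<lambda>x. a * x^2 / (b * x + 1))"
    and "x1 \<equiv> 0"
    and "x2 \<equiv> 1 / (a - b)"
  defines "\<Omega> \<equiv> {x. x \<noteq> P \<and> (\<exists>i\<ge>1. iter_defined f P i x \<and> (f ^^ i) x = P)}"
    and "\<Psi> \<equiv> {x. x \<noteq> P \<and> x \<noteq> x2 \<and> (\<exists>j\<ge>1. iter_defined f P j x \<and> (f ^^ j) x = x2)}"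
    and "\<Sigma> \<equiv> {x. x \<noteq> P \<and> x \<noteq> x1 \<and> x \<noteq> x2 \<and> (\<exists>k\<ge>2. iter_defined f P k x \<and> (f ^^ k) x = x)}"
  shows "\<Omega> \<union> \<Psi> \<union> \<Sigma> \<subseteq>
           (\<Union>i\<in>{1..}. sphere_nv nv (rseq (nv a) (nv b) i) x1)
         \<union> (\<Union>j. sphere_nv nv (lseq (nv a) (nv b) j) P)"
proof -
  have "nvf nv" using Cp unfolding is_Cp_def nvf_def by blast
  then interpret dyn nv a b using a0 lt by (simp add: dyn_def dyn_axioms_def)
  have PP: "P = PP" unfolding P_def PP_def by simp
  have ff: "f = ff" unfolding f_def ff_def by simp
  have X2: "x2 = X2" unfolding x2_def X2_def by simp
  show ?thesis
  proof
    fix x assume xU: "x \<in> \<Omega> \<union> \<Psi> \<union> \<Sigma>"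
    show "x \<in> (\<Union>i\<in>{1..}. sphere_nv nv (rseq (nv a) (nv b) i) x1)
         \<union> (\<Union>j. sphere_nv nv (lseq (nv a) (nv b) j) P)"
    proof (rule ccontr)
      assume nt: "\<not> ?thesis"
      have h1: "\<forall>j. nv x \<noteq> RR j"
      proof
        fix j
        have "rseq (nv a) (nv b) (Suc j) = RR j"
          unfolding rseq_def RR_def al_def be_def by simp
        thus "nv x \<noteq> RR j" using nt unfolding sphere_nv_def x1_def
          by (metis (mono_tags, lifting) UN_I UnI1 atLeast_iff diff_zero le_add1 mem_Collect_eq plus_1_eq_Suc)
      qed
      have h2: "\<forall>m. nv (x - PP) \<noteq> lseq al be m"
        using nt unfolding sphere_nv_def PP al_def be_def by blast
      have xP: "x \<noteq> PP" using xU unfolding \<Omega>_def \<Psi>_def \<Sigma>_def PP by blast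
      have x0: "x \<noteq> 0"
      proof
        assume x: "x = 0"
        show False using xU
        proof (elim UnE)
          assume "x \<in> \<Omega>"
          then obtain i where "(ff ^^ i) 0 = PP" unfolding \<Omega>_def PP ff x by blast
          thus False using iter0 PP0 by simp
        next
          assume "x \<in> \<Psi>"
          then obtain j where "(ff ^^ j) 0 = X2" unfolding \<Psi>_def X2 ff x by blast
          thus False using iter0 X20 by simp
        next
          assume "x \<in> \<Sigma>" thus False unfolding \<Sigma>_def x1_def x by blast
        qed
      qed
      note ml = main_loc[OF x0 xP h1 h2]
      show False using xU
      proof (elim UnE)
        assume "x \<in> \<Omega>"
        then obtain i where "(ff ^^ i) x = PP" unfolding \<Omega>_def PP ff by blast
        thus False using ml by blast
      next
        assume "x \<in> \<Psi>"
        then obtain j where "(ff ^^ j) x = X2" unfolding \<Psi>_def X2 ff by blast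
        thus False using ml by blast
      next
        assume "x \<in> \<Sigma>"
        then obtain k where "k \<ge> 2" "(ff ^^ k) x = x" unfolding \<Sigma>_def ff by blast
        thus False using ml by (metis le_trans one_le_numeral)
      qed
    qed
  qed
qed

end
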